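(* Let $X$ be a path connected, locally path connected topological space whose first singular homology group $H_1(X;\mathbb Z)$ is trivial. Let $K\subset X$ be a closed connected set. If $X\setminus K$ is connected, then the topological boundary $\partial K$ of $K$ in $X$ is connected. *)

theory Defs
  imports "HOL-Homology.Homology"
begin

end

theory Submission
  imports Defs
begin

definition eps :: "'a set \<Rightarrow> 'a chain \<Rightarrow> unit \<Rightarrow>\<^sub>0 int" where
  "eps P c = frag_extend (\<lambda>f. if f (\<lambda>j. if j = 0 then 1 else 0) \<in> P then frag_of () else 0) c"

lemma eps_of: "eps P (frag_of f) = (if f (\<lambda>j. if j = 0 then 1 else 0) \<in> P then frag_of () else 0)"
  by (simp add: eps_def)

lemma eps_diff: "eps P (a - b) = eps P a - eps P b"
  by (simp add: eps_def frag_extend_diff)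

lemma eps_add: "eps P (a + b) = eps P a + eps P b"
  by (simp add: eps_def frag_extend_add)

lemma eps_L1:
  assumes H: "\<And>f. singular_simplex 1 (subtopology X W) f \<Longrightarrow>
                 f ` standard_simplex 1 \<subseteq> P \<or> f ` standard_simplex 1 \<inter> P = {}"
    and e: "singular_chain 1 (subtopology X W) e"
  shows "eps P (chain_boundary 1 e) = 0"
  using e unfolding singular_chain_def
proof (induction rule: frag_induction)
  case zero
  then show ?case by (simp add: eps_def)
next
  case (one f)
  let ?e = "(\<lambda>j. if j = 0 then 1 else 0) :: nat \<Rightarrow> real"
  have e0: "?e \<in> standard_simplex 0" by simp
  have f0: "singular_face 1 0 f ?e = f (simplical_face 0 ?e)"
   and f1: "singular_face 1 1 f ?e = f (simplical_face 1 ?e)"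
    by (simp_all add: singular_face_def)
  have s0: "simplical_face 0 ?e \<in> standard_simplex 1" and s1: "simplical_face 1 ?e \<in> standard_simplex 1"
    using simplical_face_in_standard_simplex[of 1 0 ?e] simplical_face_in_standard_simplex[of 1 1 ?e] by auto
  have bd: "chain_boundary 1 (frag_of f) = frag_of (singular_face 1 0 f) - frag_of (singular_face 1 1 f)"
    by (simp add: chain_boundary_of)
  from H[of f] one have "f ` standard_simplex 1 \<subseteq> P \<or> f ` standard_simplex 1 \<inter> P = {}" by simp
  then show ?case
    using s0 s1 unfolding bd eps_diff eps_of f0 f1 by auto
next
  case (diff a b)
  then show ?case by (simp add: chain_boundary_diff eps_diff)
qed

lemma chain_both:
  "singular_chain p (subtopology X U) z \<Longrightarrow> singular_chain p (subtopology X V) z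
   \<Longrightarrow> singular_chain p (subtopology X (U \<inter> V)) z"
  by (auto simp: singular_chain_subtopology)

lemma sdn_add: "(singular_subdivision p ^^ n) (a + b) = (singular_subdivision p ^^ n) a + (singular_subdivision p ^^ n) b"
  by (induction n) (auto simp: singular_subdivision_add)

lemma sdn_chain: "singular_chain p X c \<Longrightarrow> singular_chain p X ((singular_subdivision p ^^ n) c)"
  by (induction n) (auto simp: singular_chain_singular_subdivision)

lemma sdn_boundary: "singular_chain p X c \<Longrightarrow>
   chain_boundary p ((singular_subdivision p ^^ n) c) = (singular_subdivision (p - Suc 0) ^^ n) (chain_boundary p c)"
proof (induction n)
  case 0
  then show ?case by simp
next
  case (Suc n)
  then show ?case
    by (simp add: chain_boundary_singular_subdivision[OF sdn_chain[OF Suc.prems]])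
qed


lemma eps_L2:
  assumes U: "openin X U" and V: "openin X V" and UV: "topspace X \<subseteq> U \<union> V"
    and H: "\<And>f. singular_simplex 1 (subtopology X (U \<inter> V)) f \<Longrightarrow>
                 f ` standard_simplex 1 \<subseteq> P \<or> f ` standard_simplex 1 \<inter> P = {}"
    and a: "singular_chain 1 (subtopology X U) a"
    and b: "singular_chain 1 (subtopology X V) b"
    and d: "singular_chain 2 X d" and dab: "chain_boundary 2 d = a + b"
  shows "eps P (chain_boundary 1 a) = 0"
proof -
  obtain n where n: "\<And>m f. \<lbrakk>n \<le> m; f \<in> Poly_Mapping.keys ((singular_subdivision 2 ^^ m) d)\<rbrakk>
                      \<Longrightarrow> \<exists>W \<in> {U,V}. f \<in> (standard_simplex 2) \<rightarrow> W"
    using sufficient_iterated_singular_subdivision_exists[of "{U,V}" X 2 d] U V UV d by auto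
  define dd where "dd = (singular_subdivision 2 ^^ n) d"
  have ddc: "singular_chain 2 X dd" unfolding dd_def by (rule sdn_chain[OF d])
  have "Poly_Mapping.keys dd \<subseteq> singular_simplex_set 2 (subtopology X U) \<union> singular_simplex_set 2 (subtopology X V)"
  proof
    fix f assume f: "f \<in> Poly_Mapping.keys dd"
    then have "singular_simplex 2 X f" using ddc by (auto simp: singular_chain_def)
    moreover have "\<exists>W \<in> {U,V}. f \<in> (standard_simplex 2) \<rightarrow> W" using n[OF order_refl] f unfolding dd_def by blast
    ultimately show "f \<in> singular_simplex_set 2 (subtopology X U) \<union> singular_simplex_set 2 (subtopology X V)"
      by (auto simp: singular_simplex_subtopology)
  qed
  then obtain dU dV where dU: "singular_chain 2 (subtopology X U) dU"
     and dV: "singular_chain 2 (subtopology X V) dV" and ddeq: "dU + dV = dd"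
    unfolding singular_chain_def by (metis frag_split)
  obtain h :: "nat \<Rightarrow> 'a chain \<Rightarrow> 'a chain" where
        h0: "\<And>p. h p 0 = 0"
        and hd: "\<And>p c1 c2. h p (c1-c2) = h p c1 - h p c2"
        and hc: "\<And>p X c. singular_chain p X c \<Longrightarrow> singular_chain (Suc p) X (h p c)"
        and hb: "\<And>p X c. singular_chain p X c
                 \<Longrightarrow> chain_boundary (Suc p) (h p c) + h (p - Suc 0) (chain_boundary p c)
                   = (singular_subdivision p ^^ n) c - c"
    by (rule chain_homotopic_iterated_singular_subdivision[of n]) blast
  have aX: "singular_chain 1 X a" using a singular_chain_subtopology by blast
  have bX: "singular_chain 1 X b" using b singular_chain_subtopology by blast
  have "chain_boundary 1 (chain_boundary 2 d) = 0"
    using chain_boundary_boundary[OF d] by simp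
  then have ab0: "chain_boundary 1 a = - chain_boundary 1 b"
    by (simp add: dab chain_boundary_add eq_neg_iff_add_eq_0)
  have daU: "singular_chain 0 (subtopology X U) (chain_boundary 1 a)"
    using singular_chain_boundary[OF a] by simp
  have "singular_chain 0 (subtopology X V) (chain_boundary 1 b)"
    using singular_chain_boundary[OF b] by simp
  then have daV: "singular_chain 0 (subtopology X V) (chain_boundary 1 a)"
    using ab0 singular_chain_minus by metis
  have daW: "singular_chain 0 (subtopology X (U \<inter> V)) (chain_boundary 1 a)"
    by (rule chain_both[OF daU daV])
  define sa where "sa = (singular_subdivision 1 ^^ n) a"
  define sb where "sb = (singular_subdivision 1 ^^ n) b"
  have hbW: "singular_chain 1 (subtopology X (U \<inter> V)) (h 0 (chain_boundary 1 a))"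
    using hc[OF daW] by simp
  have ha: "chain_boundary 2 (h 1 a) + h 0 (chain_boundary 1 a) = sa - a"
    using hb[OF a] unfolding sa_def by (simp add: numeral_2_eq_2)
  have ha2: "singular_chain 2 X (h 1 a)" using hc[OF aX] by (simp add: numeral_2_eq_2)
  have "chain_boundary 1 (chain_boundary 2 (h 1 a)) = 0"
    using chain_boundary_boundary[OF ha2] by simp
  then have dsa: "chain_boundary 1 sa = chain_boundary 1 a + chain_boundary 1 (h 0 (chain_boundary 1 a))"
    using arg_cong[OF ha, of "chain_boundary 1"] by (simp add: chain_boundary_add chain_boundary_diff algebra_simps)
  have "sa + sb = (singular_subdivision 1 ^^ n) (a + b)"
    by (simp add: sa_def sb_def sdn_add)
  also have "\<dots> = chain_boundary 2 dd"
    unfolding dab[symmetric] dd_def using sdn_boundary[OF d, of n] by simp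
  also have "\<dots> = chain_boundary 2 dU + chain_boundary 2 dV"
    by (simp add: ddeq[symmetric] chain_boundary_add)
  finally have eq: "sa - chain_boundary 2 dU = chain_boundary 2 dV - sb"
    by (simp add: algebra_simps)
  have saU: "singular_chain 1 (subtopology X U) sa" unfolding sa_def by (rule sdn_chain[OF a])
  have sbV: "singular_chain 1 (subtopology X V) sb" unfolding sb_def by (rule sdn_chain[OF b])
  have zU: "singular_chain 1 (subtopology X U) (sa - chain_boundary 2 dU)"
    using singular_chain_boundary[OF dU] saU by (simp add: singular_chain_diff)
  have zV: "singular_chain 1 (subtopology X V) (sa - chain_boundary 2 dU)"
    unfolding eq using singular_chain_boundary[OF dV] sbV by (simp add: singular_chain_diff)
  have zW: "singular_chain 1 (subtopology X (U \<inter> V)) (sa - chain_boundary 2 dU)"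
    by (rule chain_both[OF zU zV])
  have dU0: "chain_boundary 1 (chain_boundary 2 dU) = 0"
    using chain_boundary_boundary[OF dU] by simp
  have "eps P (chain_boundary 1 (sa - chain_boundary 2 dU)) = 0"
    by (rule eps_L1[OF H zW])
  then have "eps P (chain_boundary 1 sa) = 0"
    using dU0 by (simp add: chain_boundary_diff del: One_nat_def)
  moreover have "eps P (chain_boundary 1 (h 0 (chain_boundary 1 a))) = 0"
    by (rule eps_L1[OF H hbW])
  ultimately show ?thesis
    using dsa by (simp add: eps_add)
qed


definition ps :: "(real \<Rightarrow> 'a) \<Rightarrow> (nat \<Rightarrow> real) \<Rightarrow> 'a" where
  "ps g = restrict (g \<circ> (\<lambda>x. x 0)) (standard_simplex 1)"

definition pt :: "'a \<Rightarrow> (nat \<Rightarrow> real) \<Rightarrow> 'a" where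
  "pt q = restrict (\<lambda>x. q) (standard_simplex 0)"

lemma ps_simplex:
  assumes "pathin X g" shows "singular_simplex 1 X (ps g)"
proof -
  have contg: "continuous_map (subtopology euclideanreal {0..1}) X g"
    using assms by (simp add: pathin_def)
  have "continuous_map (subtopology (powertop_real UNIV) (standard_simplex (Suc 0)))
                         euclideanreal (\<lambda>x. x 0)"
    by (metis (mono_tags) UNIV_I continuous_map_from_subtopology continuous_map_product_projection)
  then have "continuous_map (subtopology (powertop_real UNIV) (standard_simplex (Suc 0)))
                              (top_of_set {0..1}) (\<lambda>x. x 0)"
    by (auto simp: continuous_map_in_subtopology standard_simplex_def)
  then show ?thesis
    using contg by (force simp: ps_def singular_simplex_def continuous_map_compose)
qed

lemma ps_boundary:
  "chain_boundary 1 (frag_of (ps g)) = frag_of (pt (g 0)) - frag_of (pt (g 1))"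
proof -
  have "singular_face (Suc 0) 0 (g \<circ> (\<lambda>x. x 0)) = pt (g 0)"
       "singular_face (Suc 0) (Suc 0) (g \<circ> (\<lambda>x. x 0)) = pt (g 1)"
    by (auto simp: pt_def singular_face_def simplical_face_def standard_simplex_0)
  then show ?thesis
    by (simp add: chain_boundary_of ps_def)
qed

lemma eps_pt: "eps P (frag_of (pt q)) = (if q \<in> P then frag_of () else 0)"
  by (simp add: eps_of pt_def)

lemma eps_L3:
  assumes U: "openin X U" and V: "openin X V" and UV: "topspace X \<subseteq> U \<union> V"
    and H: "\<And>f. singular_simplex 1 (subtopology X (U \<inter> V)) f \<Longrightarrow>
                 f ` standard_simplex 1 \<subseteq> P \<or> f ` standard_simplex 1 \<inter> P = {}"
    and triv: "trivial_group (homology_group 1 X)"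
    and g1: "pathin (subtopology X U) g1" and g2: "pathin (subtopology X V) g2"
    and e: "g1 0 = y" "g1 1 = x" "g2 0 = x" "g2 1 = y" and xy: "x \<in> P" "y \<notin> P"
  shows False
proof -
  define a where "a = frag_of (ps g1)"
  define b where "b = frag_of (ps g2)"
  have a: "singular_chain 1 (subtopology X U) a"
    using ps_simplex[OF g1] by (simp add: a_def singular_chain_of)
  have b: "singular_chain 1 (subtopology X V) b"
    using ps_simplex[OF g2] by (simp add: b_def singular_chain_of)
  have cyc: "singular_relcycle 1 X {} (a + b)"
    using a b unfolding singular_cycle
    by (auto simp: singular_chain_subtopology singular_chain_add chain_boundary_add a_def b_def ps_boundary e
         simp del: One_nat_def)
  have "homologous_rel_set 1 X {} (a + b) \<in> carrier (homology_group 1 X)"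
    using cyc carrier_relative_homology_group[of 1 X "{}"] by auto
  then have "homologous_rel_set 1 X {} (a + b) = singular_relboundary_set 1 X {}"
    using triv one_relative_homology_group[of 1 X "{}"] unfolding trivial_group_def by auto
  then have "singular_relboundary 1 X {} (a + b)"
    using homologous_rel_set_eq_relboundary by blast
  then obtain d where d: "singular_chain 2 X d" "chain_boundary 2 d = a + b"
    unfolding singular_boundary by (auto simp: numeral_2_eq_2)
  have "eps P (chain_boundary 1 a) = 0"
    by (rule eps_L2[OF U V UV H a b d])
  then show False
    using xy by (simp add: a_def ps_boundary e eps_diff eps_pt del: One_nat_def)
qed



lemma comp_aux:
  fixes X :: "'a topology" and y :: 'a
  assumes lpc: "locally_path_connected_space X" and Ac: "closedin X A"
  defines "U \<equiv> topspace X - A"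
  defines "C \<equiv> path_component_of_set (subtopology X U) y"
  shows "openin X (U - C)" "X closure_of (U - C) \<subseteq> (U - C) \<union> A" "C \<subseteq> U"
proof -
  have Uo: "openin X U" unfolding U_def using Ac by (simp add: openin_diff)
  have lU: "locally_path_connected_space (subtopology X U)"
    by (rule locally_path_connected_space_open_subset[OF lpc Uo])
  have CoU: "openin (subtopology X U) C" unfolding C_def
    by (rule openin_path_component_of_locally_path_connected_space[OF lU])
  have Co: "openin X C" by (rule openin_trans_full[OF CoU Uo])
  have CcU: "closedin (subtopology X U) C" unfolding C_def
    by (rule closedin_path_component_of_locally_path_connected_space[OF lU])
  have CU: "C \<subseteq> U" unfolding C_def using path_component_of_subset_topspace[of "subtopology X U" y]
    by (simp add: U_def)
  then show "C \<subseteq> U" .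
  obtain T where T: "closedin X T" "C = T \<inter> U" using CcU closedin_subtopology by metis
  have "U - C = U - T" using T by blast
  then show "openin X (U - C)" using Uo T by (simp add: openin_diff)
  have "U - C \<subseteq> topspace X - C" by (auto simp: U_def)
  moreover have "closedin X (topspace X - C)" using Co by (simp add: closedin_diff)
  ultimately have "X closure_of (U - C) \<subseteq> topspace X - C" by (rule closure_of_minimal)
  then show "X closure_of (U - C) \<subseteq> (U - C) \<union> A"
    using closure_of_subset_topspace[of X "U - C"] unfolding U_def by blast
qed

theorem lemmaA1:
  fixes X :: "'a topology" and K :: "'a set"
  assumes "path_connected_space X"
    and "locally_path_connected_space X"
    and "trivial_group (homology_group 1 X)"
    and "closedin X K"
    and "connectedin X K"
    and "connectedin X (topspace X - K)"
  shows "connectedin X (X frontier_of K)"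
proof (rule ccontr)
  assume nc: "\<not> connectedin X (X frontier_of K)"
  note pc = assms(1) and lpc = assms(2) and triv = assms(3) and Kc = assms(4) and Kconn = assms(5)
    and Yconn = assms(6)
  define F where "F = X frontier_of K"
  define I where "I = X interior_of K"
  define Y where "Y = topspace X - K"
  have Ksub: "K \<subseteq> topspace X" using closedin_subset[OF Kc] .
  have Fc: "closedin X F" by (simp add: F_def closedin_frontier_of)
  have FKI: "F = K - I"
    unfolding F_def I_def frontier_of_def closure_of_closedin[OF Kc] ..
  have IK: "I \<subseteq> K" unfolding I_def by (rule interior_of_subset)
  have Io: "openin X I" unfolding I_def by simp
  have Yo: "openin X Y" unfolding Y_def by (simp add: openin_diff Kc)
  have Fsub: "F \<subseteq> topspace X" using closedin_subset[OF Fc] .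
  have ncF: "\<not> connectedin X F" using nc by (simp add: F_def)
  obtain E1 E2 where E: "closedin X E1" "closedin X E2" "F \<subseteq> E1 \<union> E2" "E1 \<inter> E2 \<inter> F = {}"
       "E1 \<inter> F \<noteq> {}" "E2 \<inter> F \<noteq> {}"
    using ncF Fsub unfolding connectedin_closedin by metis
  define A where "A = E1 \<inter> F"
  define B where "B = E2 \<inter> F"
  have Ac: "closedin X A" and Bc: "closedin X B" using E Fc by (simp_all add: A_def B_def closedin_Int)
  have AB: "A \<inter> B = {}" "A \<union> B = F" "A \<noteq> {}" "B \<noteq> {}" using E by (auto simp: A_def B_def)
  have "Y \<noteq> {}"
  proof
    assume "Y = {}"
    then have "K = topspace X" using Ksub by (auto simp: Y_def)
    then have "F = {}" by (simp add: F_def frontier_of_def)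
    then show False using AB by auto
  qed
  then obtain y0 where y0: "y0 \<in> Y" by blast
  define U where "U = topspace X - A"
  define V where "V = topspace X - B"
  have Uo: "openin X U" and Vo: "openin X V" using Ac Bc by (simp_all add: U_def V_def openin_diff)
  have UV: "topspace X \<subseteq> U \<union> V" using AB by (auto simp: U_def V_def)
  have lpcU: "locally_path_connected_space (subtopology X U)"
    by (rule locally_path_connected_space_open_subset[OF lpc Uo])
  have lpcV: "locally_path_connected_space (subtopology X V)"
    by (rule locally_path_connected_space_open_subset[OF lpc Vo])
  have Ypc: "path_connectedin X Y"
  proof -
    have "connected_space (subtopology X Y)" using Yconn by (simp add: connectedin_def Y_def)
    moreover have "locally_path_connected_space (subtopology X Y)"
      by (rule locally_path_connected_space_open_subset[OF lpc Yo])
    ultimately have "path_connected_space (subtopology X Y)"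
      using path_connected_eq_connected_space by blast
    then show ?thesis by (simp add: path_connectedin_def Y_def)
  qed
  define C0 where "C0 = path_component_of_set (subtopology X U) y0"
  define C1 where "C1 = path_component_of_set (subtopology X V) y0"
  have AK: "A \<subseteq> K" "B \<subseteq> K" using AB(2) FKI by blast+
  have YU: "Y \<subseteq> U" "Y \<subseteq> V" using AK by (auto simp: Y_def U_def V_def)
  have YC0: "Y \<subseteq> C0" unfolding C0_def
    by (rule path_component_of_maximal) (use Ypc YU y0 in \<open>auto simp: path_connectedin_subtopology\<close>)
  have YC1: "Y \<subseteq> C1" unfolding C1_def
    by (rule path_component_of_maximal) (use Ypc YU y0 in \<open>auto simp: path_connectedin_subtopology\<close>)
  have "\<exists>x \<in> I. x \<in> C0 \<and> x \<in> C1"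
  proof (rule ccontr)
    assume no: "\<not> (\<exists>x \<in> I. x \<in> C0 \<and> x \<in> C1)"
    define S1 where "S1 = U - C0"
    define S2 where "S2 = V - C1"
    have S1o: "openin X S1" and S1c: "X closure_of S1 \<subseteq> S1 \<union> A" and C0U: "C0 \<subseteq> U"
      using comp_aux[OF lpc Ac, of y0] unfolding S1_def C0_def U_def by auto
    have S2o: "openin X S2" and S2c: "X closure_of S2 \<subseteq> S2 \<union> B" and C1V: "C1 \<subseteq> V"
      using comp_aux[OF lpc Bc, of y0] unfolding S2_def C1_def V_def by auto
    have "S1 \<subseteq> K" using YC0 Ksub unfolding S1_def U_def Y_def by blast
    then have S1I: "S1 \<subseteq> I" unfolding I_def using S1o by (rule interior_of_maximal)
    have "S2 \<subseteq> K" using YC1 Ksub unfolding S2_def V_def Y_def by blast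
    then have S2I: "S2 \<subseteq> I" unfolding I_def using S2o by (rule interior_of_maximal)
    have Itop: "I \<subseteq> topspace X" using IK Ksub by blast
    have IS: "I \<subseteq> S1 \<union> S2"
    proof
      fix z assume z: "z \<in> I"
      then have "z \<in> U" "z \<in> V" using Itop AB(2) FKI unfolding U_def V_def by blast+
      then show "z \<in> S1 \<union> S2" using no z unfolding S1_def S2_def by blast
    qed
    define T where "T = S1 \<inter> S2"
    have To: "openin X T" unfolding T_def using S1o S2o by blast
    have "X closure_of T \<subseteq> X closure_of S1 \<inter> X closure_of S2"
      unfolding T_def by (simp add: closure_of_mono)
    also have "\<dots> \<subseteq> T"
      using S1c S2c S1I S2I AB(1,2) FKI unfolding T_def by blast
    finally have "X closure_of T \<subseteq> T" .
    moreover have "T \<subseteq> topspace X" using S1I Itop unfolding T_def by blast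
    ultimately have Tc: "closedin X T" using closure_of_subset_eq by blast
    have cX: "connected_space X" using pc by (rule path_connected_imp_connected_space)
    have "T = {} \<or> T = topspace X" using cX To Tc unfolding connected_space_clopen_in by blast
    moreover have "y0 \<notin> T" using y0 S1I IK unfolding T_def Y_def by blast
    moreover have "y0 \<in> topspace X" using y0 unfolding Y_def by blast
    ultimately have T0: "T = {}" by blast
    define K1 where "K1 = S1 \<union> A"
    define K2 where "K2 = S2 \<union> B"
    have K1c: "closedin X K1"
    proof -
      have "X closure_of K1 \<subseteq> K1" unfolding K1_def
        using S1c closure_of_closedin[OF Ac] by auto
      moreover have "K1 \<subseteq> topspace X" unfolding K1_def using S1I Itop closedin_subset[OF Ac] by blast
      ultimately show ?thesis using closure_of_subset_eq by blast
    qed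
    have K2c: "closedin X K2"
    proof -
      have "X closure_of K2 \<subseteq> K2" unfolding K2_def
        using S2c closure_of_closedin[OF Bc] by auto
      moreover have "K2 \<subseteq> topspace X" unfolding K2_def using S2I Itop closedin_subset[OF Bc] by blast
      ultimately show ?thesis using closure_of_subset_eq by blast
    qed
    have "K \<subseteq> K1 \<union> K2" using IS AB(2) FKI unfolding K1_def K2_def by blast
    moreover have "K1 \<inter> K2 \<inter> K = {}"
      using T0 S1I S2I AB(1,2) FKI unfolding K1_def K2_def T_def by blast
    moreover have "K1 \<inter> K \<noteq> {}" using AB(3) AK unfolding K1_def by blast
    moreover have "K2 \<inter> K \<noteq> {}" using AB(4) AK unfolding K2_def by blast
    ultimately show False using Kconn K1c K2c unfolding connectedin_closedin by blast
  qed
  then obtain x where x: "x \<in> I" "x \<in> C0" "x \<in> C1" by blast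
  obtain g1 where g1: "pathin (subtopology X U) g1" "g1 0 = y0" "g1 1 = x"
  proof -
    have "path_component_of (subtopology X U) y0 x" using x(2) by (simp add: C0_def)
    then show ?thesis unfolding path_component_of_def using that by blast
  qed
  obtain g2 where g2: "pathin (subtopology X V) g2" "g2 0 = x" "g2 1 = y0"
  proof -
    have "path_component_of (subtopology X V) y0 x" using x(3) by (simp add: C1_def)
    then have "path_component_of (subtopology X V) x y0" by (rule path_component_of_sym)
    then show ?thesis unfolding path_component_of_def using that by blast
  qed
  have H: "f ` standard_simplex 1 \<subseteq> I \<or> f ` standard_simplex 1 \<inter> I = {}"
    if f: "singular_simplex 1 (subtopology X (U \<inter> V)) f" for f
  proof -
    have ss: "singular_simplex 1 X f" and im: "f ` standard_simplex 1 \<subseteq> U \<inter> V"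
      using f singular_simplex_subtopology[of 1 X "U \<inter> V" f] by auto
    have cm: "continuous_map (subtopology (powertop_real UNIV) (standard_simplex 1)) X f"
      using ss unfolding singular_simplex_def by blast
    have "connectedin (subtopology (powertop_real UNIV) (standard_simplex 1)) (standard_simplex 1)"
      by (simp add: connectedin_subtopology connectedin_standard_simplex)
    then have cn: "connectedin X (f ` standard_simplex 1)"
      by (rule connectedin_continuous_map_image[OF cm])
    have sep: "separatedin X I Y"
      using Io Yo IK by (auto simp: separatedin_open_sets disjnt_def Y_def)
    have "f ` standard_simplex 1 \<subseteq> I \<union> Y"
      using im AB(2) FKI unfolding U_def V_def Y_def by blast
    then have "f ` standard_simplex 1 \<subseteq> I \<or> f ` standard_simplex 1 \<subseteq> Y"
      using connectedin_subset_separated_union[OF cn sep] by blast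
    then show ?thesis using IK by (auto simp: Y_def)
  qed
  show False
    by (rule eps_L3[OF Uo Vo UV H triv g1(1) g2(1) g1(2,3) g2(2,3) x(1)]) (use y0 IK in \<open>auto simp: Y_def\<close>)
qed

end
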